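(* Let $\mathcal{G}\simeq\mathcal{H}$ be equivalent graph sequences and let $K$ be a field. Then $\beta_K(\mathcal{G})=\beta_K(\mathcal{H})$.
   Context: A graph sequence is a sequence $\mathcal{G}=\{G_n\}$ of finite simple graphs with uniformly bounded vertex degrees and $|V(G_n)|\to\infty$. For graph sequences with $V(H_n)=V(G_n)$, $\mathcal{H}\prec\mathcal{G}$ means there is an integer $L>0$ with $d_{G_n}(x,y)\le L\,d_{H_n}(x,y)$ for all $n,x,y$ (shortest path metrics), and $\mathcal{G}\simeq\mathcal{H}$ means $\mathcal{H}\prec\mathcal{G}$ and $\mathcal{G}\prec\mathcal{H}$. For a finite graph $G$, $\varepsilon_K(G)$ is the $K$-vector space spanned by oriented edges with $(x,y)=-(y,x)$; a cycle $(x_1,\dots,x_m,x_1)$ gives the vector $\sum_{i=1}^{m-1}(x_i,x_{i+1})+(x_m,x_1)$; $C^q_K(G)$ is the subspace spanned by the vectors of cycles of length at most $q$. $s^q_K(\mathcal{G})=\liminf_n \frac{|E(G_n)|-\dim_K C^q_K(G_n)}{|V(G_n)|}-1$ and $\beta_K(\mathcal{G})=\inf_q s^q_K(\mathcal{G})$. *)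

theory Defs
  imports "HOL-Analysis.Analysis" "HOL-Library.Extended_Nat" "HOL-Library.Function_Algebras"
begin

definition simple_graph :: "'v set \<Rightarrow> ('v \<Rightarrow> 'v \<Rightarrow> bool) \<Rightarrow> bool" where
  "simple_graph V E \<longleftrightarrow> finite V \<and> (\<forall>x y. E x y \<longrightarrow> x \<in> V \<and> y \<in> V)
     \<and> (\<forall>x y. E x y \<longrightarrow> E y x) \<and> (\<forall>x. \<not> E x x)"

definition graph_seq :: "(nat \<Rightarrow> 'v set) \<Rightarrow> (nat \<Rightarrow> 'v \<Rightarrow> 'v \<Rightarrow> bool) \<Rightarrow> bool" where
  "graph_seq V E \<longleftrightarrow> (\<forall>n. simple_graph (V n) (E n))
     \<and> (\<exists>D::nat. \<forall>n x. card {y. E n x y} \<le> D)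
     \<and> filterlim (\<lambda>n. card (V n)) at_top sequentially"

definition is_walk :: "('v \<Rightarrow> 'v \<Rightarrow> bool) \<Rightarrow> 'v \<Rightarrow> 'v \<Rightarrow> 'v list \<Rightarrow> bool" where
  "is_walk E x y xs \<longleftrightarrow> xs \<noteq> [] \<and> hd xs = x \<and> last xs = y
     \<and> (\<forall>i. Suc i < length xs \<longrightarrow> E (xs ! i) (xs ! Suc i))"

definition gdist :: "('v \<Rightarrow> 'v \<Rightarrow> bool) \<Rightarrow> 'v \<Rightarrow> 'v \<Rightarrow> enat" where
  "gdist E x y = (if \<exists>xs. is_walk E x y xs
     then enat (LEAST k. \<exists>xs. is_walk E x y xs \<and> length xs = Suc k) else \<infinity>)"

text \<open>H \<prec> G: exists L > 0 with d_G \<le> L d_H.\<close>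
definition seq_prec :: "(nat \<Rightarrow> 'v set) \<Rightarrow> (nat \<Rightarrow> 'v \<Rightarrow> 'v \<Rightarrow> bool) \<Rightarrow> (nat \<Rightarrow> 'v \<Rightarrow> 'v \<Rightarrow> bool) \<Rightarrow> bool" where
  "seq_prec V H G \<longleftrightarrow> (\<exists>L::nat. L > 0 \<and>
     (\<forall>n. \<forall>x\<in>V n. \<forall>y\<in>V n. gdist (G n) x y \<le> enat L * gdist (H n) x y))"

definition seq_equiv :: "(nat \<Rightarrow> 'v set) \<Rightarrow> (nat \<Rightarrow> 'v \<Rightarrow> 'v \<Rightarrow> bool) \<Rightarrow> (nat \<Rightarrow> 'v \<Rightarrow> 'v \<Rightarrow> bool) \<Rightarrow> bool" where
  "seq_equiv V G H \<longleftrightarrow> seq_prec V H G \<and> seq_prec V G H"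

definition num_edges :: "('v \<Rightarrow> 'v \<Rightarrow> bool) \<Rightarrow> nat" where
  "num_edges E = card {{x, y} | x y. E x y}"

definition cycles_upto :: "('v \<Rightarrow> 'v \<Rightarrow> bool) \<Rightarrow> nat \<Rightarrow> 'v list set" where
  "cycles_upto E q = {xs. 3 \<le> length xs \<and> length xs \<le> q \<and> distinct xs \<and>
     (\<forall>i < length xs. E (xs ! i) (xs ! ((Suc i) mod length xs)))}"

definition oedge :: "'v \<Rightarrow> 'v \<Rightarrow> ('v \<times> 'v \<Rightarrow> 'k::field)" where
  "oedge x y = (\<lambda>p. (if p = (x, y) then 1 else 0) - (if p = (y, x) then 1 else 0))"

definition cycle_vec :: "'v list \<Rightarrow> ('v \<times> 'v \<Rightarrow> 'k::field)" where
  "cycle_vec xs = (\<lambda>p. \<Sum>i<length xs. oedge (xs ! i) (xs ! ((Suc i) mod length xs)) p)"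

definition dim_cycle_space :: "'k::field itself \<Rightarrow> ('v \<Rightarrow> 'v \<Rightarrow> bool) \<Rightarrow> nat \<Rightarrow> nat" where
  "dim_cycle_space K E q =
     Vector_Spaces.vector_space.dim (\<lambda>(c::'k) (f::'v \<times> 'v \<Rightarrow> 'k) p. c * f p) (cycle_vec ` cycles_upto E q)"

definition s_q :: "'k::field itself \<Rightarrow> (nat \<Rightarrow> 'v set) \<Rightarrow> (nat \<Rightarrow> 'v \<Rightarrow> 'v \<Rightarrow> bool) \<Rightarrow> nat \<Rightarrow> ereal" where
  "s_q K V G q = liminf (\<lambda>n. ereal ((real (num_edges (G n)) - real (dim_cycle_space K (G n) q))
        / real (card (V n)))) - 1"

definition beta :: "'k::field itself \<Rightarrow> (nat \<Rightarrow> 'v set) \<Rightarrow> (nat \<Rightarrow> 'v \<Rightarrow> 'v \<Rightarrow> bool) \<Rightarrow> ereal" where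
  "beta K V G = (INF q. s_q K V G q)"

end

theory Submission
  imports Defs
begin

interpretation VS: vector_space "\<lambda>(c::'k::field) (f::'v \<times> 'v \<Rightarrow> 'k) p. c * f p"
  by unfold_locales (simp_all add: fun_eq_iff algebra_simps)

fun wk :: "('v \<Rightarrow> 'v \<Rightarrow> bool) \<Rightarrow> 'v list \<Rightarrow> bool" where
  "wk E (x # y # r) = (E x y \<and> wk E (y # r))"
| "wk E _ = True"

fun wv :: "'v list \<Rightarrow> ('v \<times> 'v \<Rightarrow> 'k::field)" where
  "wv (x # y # r) = oedge x y + wv (y # r)"
| "wv _ = 0"

lemma wv_append: "wv (a @ v # b) = wv (a @ [v]) + wv (v # b)"
proof (induction a)
  case Nil then show ?case by simp
next
  case (Cons x a) then show ?case by (cases a) (simp_all add: algebra_simps)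
qed

lemma wk_append: "wk E (a @ v # b) = (wk E (a @ [v]) \<and> wk E (v # b))"
proof (induction a)
  case Nil then show ?case by simp
next
  case (Cons x a) then show ?case by (cases a) auto
qed

lemma wk_nth: "wk E ys \<longleftrightarrow> (\<forall>i. Suc i < length ys \<longrightarrow> E (ys ! i) (ys ! Suc i))"
proof (induction E ys rule: wk.induct)
  case (1 E x y r)
  show ?case
  proof
    assume "wk E (x # y # r)"
    then show "\<forall>i. Suc i < length (x # y # r) \<longrightarrow> E ((x # y # r) ! i) ((x # y # r) ! Suc i)"
      using 1 by (auto simp: nth_Cons split: nat.splits)
  next
    assume h: "\<forall>i. Suc i < length (x # y # r) \<longrightarrow> E ((x # y # r) ! i) ((x # y # r) ! Suc i)"
    have "E x y" using h[rule_format, of 0] by simp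
    moreover have "\<forall>i. Suc i < length (y # r) \<longrightarrow> E ((y # r) ! i) ((y # r) ! Suc i)"
      using h by (metis Suc_less_eq length_Cons nth_Cons_Suc)
    ultimately show "wk E (x # y # r)" using 1 by simp
  qed
qed auto

lemma wv_nth: "(wv ys :: 'v \<times> 'v \<Rightarrow> 'k::field) = (\<lambda>p. \<Sum>i< length ys - 1. oedge (ys ! i) (ys ! Suc i) p)"
proof (induction ys rule: wv.induct)
  case (1 x y r)
  have h: "(\<Sum>i<length (x # y # r) - 1. oedge ((x # y # r) ! i) ((x # y # r) ! Suc i) p)
      = oedge x y p + (\<Sum>i<length (y # r) - 1. oedge ((y # r) ! i) ((y # r) ! Suc i) p)" for p
  proof -
    have "(\<Sum>i<length (x # y # r) - 1. oedge ((x # y # r) ! i) ((x # y # r) ! Suc i) p)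
       = (\<Sum>i<Suc (length r). oedge ((x # y # r) ! i) ((x # y # r) ! Suc i) p)" by simp
    also have "\<dots> = oedge x y p + (\<Sum>i<length r. oedge ((x # y # r) ! Suc i) ((x # y # r) ! Suc (Suc i)) p)"
      unfolding sum.lessThan_Suc_shift by simp
    finally show ?thesis by simp
  qed
  show ?case
  proof (rule ext)
    fix p
    have "(wv (x # y # r) :: 'v \<times> 'v \<Rightarrow> 'k) p = oedge x y p + wv (y # r) p" by simp
    also have "\<dots> = oedge x y p + (\<Sum>i<length (y # r) - 1. oedge ((y # r) ! i) ((y # r) ! Suc i) p)"
      using 1 by simp
    also have "\<dots> = (\<Sum>i<length (x # y # r) - 1. oedge ((x # y # r) ! i) ((x # y # r) ! Suc i) p)"
      by (rule h[symmetric])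
    finally show "(wv (x # y # r) :: 'v \<times> 'v \<Rightarrow> 'k) p = (\<Sum>i<length (x # y # r) - 1. oedge ((x # y # r) ! i) ((x # y # r) ! Suc i) p)" .
  qed
qed (auto simp: fun_eq_iff)

lemma cycle_vec_wv:
  assumes "xs \<noteq> []"
  shows "cycle_vec xs = wv (xs @ [hd xs])"
proof -
  let ?n = "length xs"
  have "cycle_vec xs p = wv (xs @ [hd xs]) p" for p
  proof -
    have "wv (xs @ [hd xs]) p = (\<Sum>i<?n. oedge ((xs @ [hd xs]) ! i) ((xs @ [hd xs]) ! Suc i) p)"
      by (simp add: wv_nth)
    also have "\<dots> = (\<Sum>i<?n. oedge (xs ! i) (xs ! (Suc i mod ?n)) p)"
    proof (rule sum.cong)
      fix i assume "i \<in> {..<?n}"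
      then have i: "i < ?n" by simp
      show "oedge ((xs @ [hd xs]) ! i) ((xs @ [hd xs]) ! Suc i) p = oedge (xs ! i) (xs ! (Suc i mod ?n)) p"
      proof (cases "Suc i < ?n")
        case True then show ?thesis using i by (simp add: nth_append)
        next
        case False then have "Suc i = ?n" using i by simp
        then show ?thesis using i assms by (simp add: nth_append hd_conv_nth)
      qed
    qed simp
    finally show ?thesis unfolding cycle_vec_def by (rule sym)
  qed
  then show ?thesis by (rule ext)
qed

lemma oedge_self: "oedge x x = 0"
  by (simp add: oedge_def fun_eq_iff)

lemma oedge_anti: "oedge x y + oedge y x = 0"
  by (auto simp add: oedge_def fun_eq_iff)

lemma cycle_in_cycles:
  assumes "wk E (xs @ [hd xs])" "distinct xs" "3 \<le> length xs" "length xs \<le> q"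
  shows "xs \<in> cycles_upto E q"
proof -
  let ?n = "length xs"
  have ne: "xs \<noteq> []" using assms by auto
  have "E (xs ! i) (xs ! (Suc i mod ?n))" if i: "i < ?n" for i
  proof -
    have e: "E ((xs @ [hd xs]) ! i) ((xs @ [hd xs]) ! Suc i)"
      using assms(1) i unfolding wk_nth by simp
    show ?thesis
    proof (cases "Suc i < ?n")
      case True then show ?thesis using e i by (simp add: nth_append)
    next
      case False then have "Suc i = ?n" using i by simp
      then show ?thesis using e i ne by (simp add: nth_append hd_conv_nth)
    qed
  qed
  then show ?thesis using assms unfolding cycles_upto_def by auto
qed

lemma closed_walk_span:
  fixes w :: "'v list"
  assumes "wk E w" "w \<noteq> []" "hd w = last w" "length w \<le> Suc q"
  shows "(wv w :: 'v \<times> 'v \<Rightarrow> 'k::field) \<in> VS.span (cycle_vec ` cycles_upto E q)"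
  using assms
proof (induction "length w" arbitrary: w rule: less_induct)
  case less
  define xs where "xs = butlast w"
  define h where "h = hd w"
  have w: "w = xs @ [h]" using less.prems unfolding xs_def h_def
    by (metis append_butlast_last_id)
  show ?case
  proof (cases "distinct xs")
    case True
    consider "length xs = 0" | "length xs = 1" | "length xs = 2" | "length xs \<ge> 3" by linarith
    then show ?thesis
    proof cases
      case 1 then have "w = [h]" using w by simp
      then have "(wv w :: 'v \<times> 'v \<Rightarrow> 'k) = 0" by simp
      then show ?thesis by (simp add: VS.span_zero)
    next
      case 2 then obtain a where a: "xs = [a]" by (metis length_0_conv length_Suc_conv One_nat_def)
      then have "w = [a, h]" using w by simp
      moreover have "h = a" unfolding h_def using arg_cong[OF \<open>w = [a, h]\<close>, of hd] by simp
      ultimately have "w = [a, a]" by simp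
      then have "(wv w :: 'v \<times> 'v \<Rightarrow> 'k) = 0" by (simp add: oedge_self)
      then show ?thesis by (simp add: VS.span_zero)
    next
      case 3 then obtain a b where a: "xs = [a, b]"
        by (metis (no_types, lifting) One_nat_def Suc_1 length_0_conv length_Suc_conv)
      then have "w = [a, b, h]" using w by simp
      moreover have "h = a" unfolding h_def using arg_cong[OF \<open>w = [a, b, h]\<close>, of hd] by simp
      ultimately have "w = [a, b, a]" by simp
      then have "(wv w :: 'v \<times> 'v \<Rightarrow> 'k) = 0" by (simp add: oedge_anti)
      then show ?thesis by (simp add: VS.span_zero)
    next
      case 4
      then have ne: "xs \<noteq> []" by auto
      have hw: "h = hd xs" unfolding h_def using arg_cong[OF w, of hd] ne by simp
      have w': "w = xs @ [hd xs]" using w hw by simp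
      have lq: "length xs \<le> q" using less.prems(4) w by simp
      have wkx: "wk E (xs @ [hd xs])" using less.prems(1) w' by simp
      have "xs \<in> cycles_upto E q"
        using cycle_in_cycles[OF wkx True 4 lq] .
      then have "(cycle_vec xs :: 'v \<times> 'v \<Rightarrow> 'k) \<in> cycle_vec ` cycles_upto E q" by (rule imageI)
      moreover have "cycle_vec xs = (wv w :: 'v \<times> 'v \<Rightarrow> 'k)"
        using cycle_vec_wv[OF ne] w' by simp
      ultimately have "(wv w :: 'v \<times> 'v \<Rightarrow> 'k) \<in> cycle_vec ` cycles_upto E q" by simp
      then show ?thesis by (rule VS.span_base)
    qed
  next
    case False
    obtain a v b c where xs: "xs = a @ [v] @ b @ [v] @ c"
      using not_distinct_decomp[OF False] by blast
    define w1 where "w1 = v # b @ [v]"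
    define w2 where "w2 = a @ [v] @ c @ [h]"
    have ws: "w = a @ v # (b @ v # (c @ [h]))" using w xs by simp
    have ws2: "w2 = a @ v # (c @ [h])" unfolding w2_def by simp
    have eq: "(wv w :: 'v \<times> 'v \<Rightarrow> 'k) = wv w1 + wv w2"
    proof -
      have "(wv w :: 'v \<times> 'v \<Rightarrow> 'k) = wv (a @ [v]) + wv (v # b @ v # (c @ [h]))"
        by (subst ws, rule wv_append)
      also have "(wv (v # b @ v # (c @ [h])) :: 'v \<times> 'v \<Rightarrow> 'k)
          = wv ((v # b) @ [v]) + wv (v # (c @ [h]))"
        using wv_append[of "v # b" v "c @ [h]"] by simp
      finally have e1: "(wv w :: 'v \<times> 'v \<Rightarrow> 'k) = wv (a @ [v]) + (wv ((v # b) @ [v]) + wv (v # (c @ [h])))" .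
      have e2: "(wv w2 :: 'v \<times> 'v \<Rightarrow> 'k) = wv (a @ [v]) + wv (v # (c @ [h]))"
        unfolding ws2 by (rule wv_append)
      show ?thesis unfolding e1 e2 w1_def by (simp add: algebra_simps)
    qed
    have wk1: "wk E w1" and wk2: "wk E w2"
    proof -
      have "wk E w" by (rule less.prems(1))
      then have A: "wk E (a @ [v])" and B: "wk E (v # b @ v # (c @ [h]))"
        using ws wk_append[of E a v "b @ v # (c @ [h])"] by auto
      from B have C: "wk E ((v # b) @ [v])" and D: "wk E (v # (c @ [h]))"
        using wk_append[of E "v # b" v "c @ [h]"] by auto
      show "wk E w1" using C unfolding w1_def by simp
      have e: "wk E w2 = (wk E (a @ [v]) \<and> wk E (v # (c @ [h])))"
        unfolding ws2 by (rule wk_append)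
      show "wk E w2" using A D e by simp
    qed
    have lw: "length w = length a + length b + length c + 3" using ws by simp
    have h1: "(wv w1 :: 'v \<times> 'v \<Rightarrow> 'k) \<in> VS.span (cycle_vec ` cycles_upto E q)"
      by (rule less.hyps) (use lw less.prems wk1 in \<open>auto simp: w1_def\<close>)
    have hd2: "hd w2 = last w2"
    proof (cases a)
      case Nil
      then have "h = v" unfolding h_def using arg_cong[OF ws, of hd] by simp
      then show ?thesis using Nil unfolding w2_def by simp
    next
      case (Cons z zs)
      then have "h = z" unfolding h_def using arg_cong[OF ws, of hd] by simp
      then show ?thesis using Cons unfolding w2_def by simp
    qed
    have h2: "(wv w2 :: 'v \<times> 'v \<Rightarrow> 'k) \<in> VS.span (cycle_vec ` cycles_upto E q)"
      by (rule less.hyps) (use lw less.prems wk2 hd2 in \<open>auto simp: w2_def\<close>)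
    show ?thesis using eq h1 h2 by (simp add: VS.span_add)
  qed
qed

lemma span_vanish:
  fixes v :: "'v \<times> 'v \<Rightarrow> 'k::field"
  assumes "v \<in> VS.span S" "\<forall>s\<in>S. s p = 0"
  shows "v p = 0"
proof -
  have sub: "VS.subspace {v :: 'v \<times> 'v \<Rightarrow> 'k. v p = 0}"
    by (rule VS.subspaceI) auto
  have "VS.span S \<subseteq> {v. v p = 0}"
    by (rule VS.span_minimal) (use assms(2) sub in auto)
  then show ?thesis using assms(1) by auto
qed

lemma card_le_dim:
  fixes S T :: "('v \<times> 'v \<Rightarrow> 'k::field) set"
  assumes "VS.independent S" "S \<subseteq> VS.span T" "finite T"
  shows "card S \<le> VS.dim T"
proof -
  obtain B where B: "B \<subseteq> T" "VS.independent B" "T \<subseteq> VS.span B" "card B = VS.dim T"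
    by (rule VS.basis_exists)
  have "VS.span T \<subseteq> VS.span B"
    using VS.span_mono[OF B(3)] unfolding VS.span_span .
  then have "S \<subseteq> VS.span B" using assms(2) by auto
  moreover have "finite B" using B(1) assms(3) finite_subset by auto
  ultimately show ?thesis using VS.independent_span_bound[of B S] assms(1) B(4) by auto
qed

lemma oedge_vanish:
  assumes "G x y" "\<not> G a b" "\<not> G b a"
  shows "oedge x y (a, b) = 0"
proof -
  have 1: "(a, b) \<noteq> (x, y)" using assms by auto
  have 2: "(a, b) \<noteq> (y, x)" using assms by auto
  show ?thesis unfolding oedge_def if_not_P[OF 1] if_not_P[OF 2] by simp
qed

lemma wv_vanish:
  assumes "wk G w" "\<not> G a b" "\<not> G b a"
  shows "(wv w :: 'v \<times> 'v \<Rightarrow> 'k::field) (a, b) = 0"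
  using assms
proof (induction w rule: wv.induct)
  case (1 x y r)
  then have "G x y" "wk G (y # r)" by simp_all
  then have "oedge x y (a, b) = (0::'k)" "(wv (y # r) :: 'v \<times> 'v \<Rightarrow> 'k) (a, b) = 0"
    using oedge_vanish[of G x y a b] 1(3,4) 1(1)[OF _ 1(3,4)] by simp_all
  then show ?case by simp
qed auto

lemma cycle_vanish:
  assumes "xs \<in> cycles_upto G q" "\<not> G a b" "\<not> G b a"
  shows "(cycle_vec xs :: 'v \<times> 'v \<Rightarrow> 'k::field) (a, b) = 0"
proof -
  have "oedge (xs ! i) (xs ! (Suc i mod length xs)) (a, b) = (0::'k)" if "i < length xs" for i
    using assms(1) that oedge_vanish[of G "xs ! i" "xs ! (Suc i mod length xs)" a b] assms(2,3)
    unfolding cycles_upto_def by blast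
  then show ?thesis unfolding cycle_vec_def by (simp add: sum.neutral)
qed

lemma finite_cycles:
  assumes "simple_graph V E"
  shows "finite (cycles_upto E q)"
proof -
  have "cycles_upto E q \<subseteq> {xs. set xs \<subseteq> V \<and> length xs \<le> q}"
  proof
    fix xs assume xs: "xs \<in> cycles_upto E q"
    have "x \<in> V" if "x \<in> set xs" for x
    proof -
      obtain i where i: "i < length xs" "x = xs ! i" using \<open>x \<in> set xs\<close> by (metis in_set_conv_nth)
      then have "E (xs ! i) (xs ! (Suc i mod length xs))" using xs unfolding cycles_upto_def by auto
      then show ?thesis using assms i unfolding simple_graph_def by auto
    qed
    then show "xs \<in> {xs. set xs \<subseteq> V \<and> length xs \<le> q}" using xs unfolding cycles_upto_def by auto
  qed
  moreover have "finite {xs. set xs \<subseteq> V \<and> length xs \<le> q}"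
    by (rule finite_lists_length_le) (use assms in \<open>auto simp: simple_graph_def\<close>)
  ultimately show ?thesis by (rule finite_subset)
qed

lemma cycles_mono:
  assumes "\<And>x y. G x y \<Longrightarrow> U x y" "q0 \<le> q"
  shows "cycles_upto G q0 \<subseteq> cycles_upto U q"
  using assms unfolding cycles_upto_def by auto

lemma wk_mono0: "wk G w \<Longrightarrow> (\<forall>x y. G x y \<longrightarrow> U x y) \<Longrightarrow> wk U w"
  by (induction G w rule: wk.induct) auto

lemma wk_mono:
  assumes "\<And>x y. G x y \<Longrightarrow> U x y" "wk G w"
  shows "wk U w"
  using wk_mono0[OF assms(2)] assms(1) by blast

lemma oedge_swap: "oedge y x p = - oedge x y p"
  by (simp add: oedge_def)

lemma wv_rev_pt: "(wv (rev w) :: 'v \<times> 'v \<Rightarrow> 'k::field) p = - wv w p"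
proof (induction w rule: wv.induct)
  case (1 x y r)
  have "(wv (rev (x # y # r)) :: 'v \<times> 'v \<Rightarrow> 'k) = wv (rev r @ y # [x])" by simp
  also have "\<dots> = wv (rev r @ [y]) + wv [y, x]" by (rule wv_append)
  also have "\<dots> = wv (rev (y # r)) + oedge y x" by simp
  finally have "(wv (rev (x # y # r)) :: 'v \<times> 'v \<Rightarrow> 'k) p = wv (rev (y # r)) p + oedge y x p" by simp
  also have "\<dots> = - wv (y # r) p - oedge x y p" using 1 oedge_swap[of y x p] by simp
  also have "\<dots> = - (wv (x # y # r) :: 'v \<times> 'v \<Rightarrow> 'k) p" by simp
  finally show ?case .
qed auto

lemma wv_rev: "(wv (rev w) :: 'v \<times> 'v \<Rightarrow> 'k::field) = - wv w"
  by (rule ext) (simp add: wv_rev_pt)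

lemma wk_rev0: "wk G w \<Longrightarrow> (\<forall>x y. G x y \<longrightarrow> G y x) \<Longrightarrow> wk G (rev w)"
proof (induction G w rule: wk.induct)
  case (1 E x y r)
  have "wk E (rev (x # y # r)) = wk E (rev r @ y # [x])" by simp
  also have "\<dots> = (wk E (rev r @ [y]) \<and> wk E [y, x])" by (rule wk_append)
  finally show ?case using 1 by simp
qed auto

lemma wk_rev:
  assumes "\<And>x y. G x y \<Longrightarrow> G y x" "wk G w"
  shows "wk G (rev w)"
  using wk_rev0[OF assms(2)] assms(1) by blast

lemma cycle_wk:
  assumes "xs \<in> cycles_upto E q"
  shows "wk E (xs @ [hd xs])"
proof -
  let ?n = "length xs"
  have ne: "xs \<noteq> []" using assms unfolding cycles_upto_def by auto
  have e: "E (xs ! i) (xs ! (Suc i mod ?n))" if "i < ?n" for i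
    using assms that unfolding cycles_upto_def by auto
  have "E ((xs @ [hd xs]) ! i) ((xs @ [hd xs]) ! Suc i)" if i: "Suc i < length (xs @ [hd xs])" for i
  proof (cases "Suc i < ?n")
    case True then show ?thesis using e[of i] by (simp add: nth_append)
  next
    case False then have "Suc i = ?n" using i by simp
    then show ?thesis using e[of i] ne by (simp add: nth_append hd_conv_nth)
  qed
  then show ?thesis unfolding wk_nth by blast
qed

fun repl :: "('v \<Rightarrow> 'v \<Rightarrow> 'v list) \<Rightarrow> 'v list \<Rightarrow> 'v list" where
  "repl P (x # y # r) = butlast (P x y) @ repl P (y # r)"
| "repl P [x] = [x]"
| "repl P [] = []"

lemma repl_props:
  fixes D :: "('v \<times> 'v \<Rightarrow> 'k::field) set"
  assumes P1: "\<And>x y. U x y \<Longrightarrow> wk G (P x y) \<and> P x y \<noteq> [] \<and> hd (P x y) = x \<and> last (P x y) = y \<and> length (P x y) \<le> Suc L"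
    and P2: "\<And>x y. U x y \<Longrightarrow> oedge x y - wv (P x y) \<in> VS.span D"
  shows "wk U w \<Longrightarrow> w \<noteq> [] \<Longrightarrow> wk G (repl P w) \<and> repl P w \<noteq> [] \<and> hd (repl P w) = hd w
    \<and> last (repl P w) = last w \<and> length (repl P w) \<le> L * (length w - 1) + 1
    \<and> (wv w - wv (repl P w) :: 'v \<times> 'v \<Rightarrow> 'k) \<in> VS.span D"
proof (induction w rule: induct_list012)
  case (3 x y r)
  define p where "p = P x y"
  define R where "R = repl P (y # r)"
  have uxy: "U x y" and wkr: "wk U (y # r)" using 3(3) by simp_all
  have IH0: "wk G R \<and> R \<noteq> [] \<and> hd R = hd (y # r) \<and> last R = last (y # r) \<and> length R \<le> L * (length (y # r) - 1) + 1
    \<and> (wv (y # r) - wv R :: 'v \<times> 'v \<Rightarrow> 'k) \<in> VS.span D"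
    unfolding R_def by (rule 3(2)[OF wkr]) simp
  have IH: "wk G R \<and> R \<noteq> [] \<and> hd R = y \<and> last R = last (y # r) \<and> length R \<le> L * length r + 1
    \<and> (wv (y # r) - wv R :: 'v \<times> 'v \<Rightarrow> 'k) \<in> VS.span D"
  proof -
    have "hd (y # r) = y" "L * (length (y # r) - 1) + 1 = L * length r + 1" by simp_all
    then show ?thesis using IH0 by metis
  qed
  have pp: "wk G p \<and> p \<noteq> [] \<and> hd p = x \<and> last p = y \<and> length p \<le> Suc L"
    using P1[OF uxy] unfolding p_def by blast
  have pd: "oedge x y - wv p \<in> VS.span D" using P2[OF uxy] unfolding p_def by blast
  have pe: "p = butlast p @ [y]" using pp by (metis append_butlast_last_id)
  have Re: "R = y # tl R" using IH by (metis list.collapse)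
  have rep: "repl P (x # y # r) = butlast p @ y # tl R"
    using Re unfolding p_def R_def by (metis repl.simps(1))
  have wkeq: "wk G (butlast p @ y # tl R) = (wk G (butlast p @ [y]) \<and> wk G (y # tl R))"
    by (rule wk_append)
  have wveq: "(wv (butlast p @ y # tl R) :: 'v \<times> 'v \<Rightarrow> 'k) = wv (butlast p @ [y]) + wv (y # tl R)"
    by (rule wv_append)
  have wv1: "(wv (butlast p @ y # tl R) :: 'v \<times> 'v \<Rightarrow> 'k) = wv p + wv R"
    using wveq pe Re by metis
  have wk1: "wk G (butlast p @ y # tl R)" using wkeq pe Re pp IH by metis
  have hd1: "hd (butlast p @ y # tl R) = x"
  proof (cases "butlast p = []")
    case True
    then have "p = [y]" using pe by simp
    then have "x = y" using pp by simp
    then show ?thesis using True by simp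
  next
    case False
    then have "hd (butlast p @ y # tl R) = hd (butlast p)" by simp
    also have "\<dots> = hd p" using False pe by (metis hd_append2)
    finally show ?thesis using pp by simp
  qed
  have last1: "last (butlast p @ y # tl R) = last (y # r)" using IH Re by (metis last_appendR list.distinct(1))
  have len1: "length (butlast p @ y # tl R) \<le> L * (length (x # y # r) - 1) + 1"
  proof -
    have "length (butlast p @ y # tl R) = length (butlast p) + length R" using Re
      by (metis length_Cons length_append)
    also have "\<dots> \<le> L + (L * length r + 1)"
    proof -
      have "length p \<le> Suc L" "length R \<le> L * length r + 1" using pp IH by blast+
      then show ?thesis by simp
    qed
    finally show ?thesis by simp
  qed
  have "(wv (x # y # r) - wv (butlast p @ y # tl R) :: 'v \<times> 'v \<Rightarrow> 'k)
      = (oedge x y - wv p) + (wv (y # r) - wv R)"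
    unfolding wv1 by simp
  then have sp: "(wv (x # y # r) - wv (butlast p @ y # tl R) :: 'v \<times> 'v \<Rightarrow> 'k) \<in> VS.span D"
    using pd IH VS.span_add by metis
  have hh: "hd (x # y # r) = x" "last (x # y # r) = last (y # r)" "butlast p @ y # tl R \<noteq> []" by simp_all
  show ?case unfolding rep hh(1,2) using wk1 hd1 last1 len1 sp hh(3) by blast
next
  case (2 x)
  have "(wv [x] - wv [x] :: 'v \<times> 'v \<Rightarrow> 'k) \<in> VS.span D"
    by (subst diff_self) (rule VS.span_zero)
  moreover have "wk G (repl P [x]) \<and> repl P [x] \<noteq> [] \<and> hd (repl P [x]) = hd [x]
    \<and> last (repl P [x]) = last [x] \<and> length (repl P [x]) \<le> L * (length [x] - 1) + 1" by simp
  ultimately show ?case unfolding repl.simps(2) by blast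
qed simp

context
  fixes V :: "'v set" and G U :: "'v \<Rightarrow> 'v \<Rightarrow> bool" and L :: nat
  assumes sgU: "simple_graph V U" and sgG: "simple_graph V G" and sub: "\<And>x y. G x y \<Longrightarrow> U x y"
    and pths: "\<And>x y. U x y \<Longrightarrow> \<exists>p. wk G p \<and> p \<noteq> [] \<and> hd p = x \<and> last p = y \<and> length p \<le> Suc L"
begin

definition newE :: "'v set set" where "newE = {{a, b} | a b. U a b \<and> \<not> G a b}"

lemma symG: "G x y \<Longrightarrow> G y x" using sgG unfolding simple_graph_def by blast
lemma symU: "U x y \<Longrightarrow> U y x" using sgU unfolding simple_graph_def by blast
lemma irrU: "\<not> U x x" using sgU unfolding simple_graph_def by blast

lemma finite_edges:
  assumes "simple_graph V E"
  shows "finite {{x, y} | x y. E x y}"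
proof -
  have "{{x, y} | x y. E x y} \<subseteq> Pow V" using assms unfolding simple_graph_def by auto
  moreover have "finite V" using assms unfolding simple_graph_def by auto
  ultimately show ?thesis using finite_subset by blast
qed

lemma num_edges_U: "num_edges U = num_edges G + card newE"
proof -
  have eq: "{{x, y} | x y. U x y} = {{x, y} | x y. G x y} \<union> newE"
    unfolding newE_def using sub by blast
  have disj: "{{x, y} | x y. G x y} \<inter> newE = {}"
  proof -
    have False if "{x, y} = {a, b}" "G x y" "U a b" "\<not> G a b" for x y a b
      using that symG by (metis doubleton_eq_iff)
    then show ?thesis unfolding newE_def by blast
  qed
  have f1: "finite {{x, y} | x y. G x y}" by (rule finite_edges[OF sgG])
  have "finite {{x, y} | x y. U x y}" by (rule finite_edges[OF sgU])
  then have f2: "finite newE" using eq by simp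
  show ?thesis unfolding num_edges_def eq using card_Un_disjoint[OF f1 f2 disj] .
qed

lemma finite_newE: "finite newE"
proof -
  have "newE \<subseteq> {{x, y} | x y. U x y}" unfolding newE_def by blast
  then show ?thesis using finite_edges[OF sgU] finite_subset by blast
qed

definition ori :: "'v set \<Rightarrow> 'v \<times> 'v" where
  "ori s = (SOME ab. s = {fst ab, snd ab} \<and> U (fst ab) (snd ab) \<and> \<not> G (fst ab) (snd ab))"

lemma ori:
  assumes "s \<in> newE"
  shows "s = {fst (ori s), snd (ori s)} \<and> U (fst (ori s)) (snd (ori s)) \<and> \<not> G (fst (ori s)) (snd (ori s))"
proof -
  obtain a b where "s = {a, b}" "U a b" "\<not> G a b" using assms unfolding newE_def by blast
  then have "\<exists>ab. s = {fst ab, snd ab} \<and> U (fst ab) (snd ab) \<and> \<not> G (fst ab) (snd ab)"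
    by (intro exI[of _ "(a, b)"]) simp
  then show ?thesis unfolding ori_def by (rule someI_ex)
qed

definition gp :: "'v \<Rightarrow> 'v \<Rightarrow> 'v list" where
  "gp x y = (SOME p. wk G p \<and> p \<noteq> [] \<and> hd p = x \<and> last p = y \<and> length p \<le> Suc L)"

lemma gp:
  assumes "U x y"
  shows "wk G (gp x y) \<and> gp x y \<noteq> [] \<and> hd (gp x y) = x \<and> last (gp x y) = y \<and> length (gp x y) \<le> Suc L"
  unfolding gp_def by (rule someI_ex[OF pths[OF assms]])

definition P :: "'v \<Rightarrow> 'v \<Rightarrow> 'v list" where
  "P x y = (if G x y then [x, y] else if (x, y) = ori {x, y} then gp x y else rev (gp y x))"

definition dvec :: "'v set \<Rightarrow> ('v \<times> 'v \<Rightarrow> 'k::field)" where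
  "dvec s = oedge (fst (ori s)) (snd (ori s)) - wv (gp (fst (ori s)) (snd (ori s)))"

lemma ori_cases:
  assumes "U x y" "\<not> G x y" "(x, y) \<noteq> ori {x, y}"
  shows "ori {x, y} = (y, x)"
proof -
  have m: "{x, y} \<in> newE" using assms unfolding newE_def by blast
  have "{x, y} = {fst (ori {x, y}), snd (ori {x, y})}" using ori[OF m] by blast
  then have "(fst (ori {x, y}) = x \<and> snd (ori {x, y}) = y) \<or> (fst (ori {x, y}) = y \<and> snd (ori {x, y}) = x)"
    by (metis doubleton_eq_iff)
  then show ?thesis using assms(3) by (metis prod.collapse)
qed

lemma P_ok:
  assumes "U x y" "0 < L"
  shows "wk G (P x y) \<and> P x y \<noteq> [] \<and> hd (P x y) = x \<and> last (P x y) = y \<and> length (P x y) \<le> Suc L"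
proof (cases "G x y")
  case True
  then show ?thesis using assms unfolding P_def by simp
next
  case False
  show ?thesis
  proof (cases "(x, y) = ori {x, y}")
    case True
    then show ?thesis using False gp[OF assms(1)] unfolding P_def by simp
  next
    case ne: False
    have uyx: "U y x" using symU assms(1) by blast
    have p: "P x y = rev (gp y x)" using False ne unfolding P_def by simp
    have g: "wk G (gp y x) \<and> gp y x \<noteq> [] \<and> hd (gp y x) = y \<and> last (gp y x) = x \<and> length (gp y x) \<le> Suc L"
      by (rule gp[OF uyx])
    then have "wk G (rev (gp y x))" using wk_rev[of G] symG by blast
    then show ?thesis unfolding p using g by (simp add: hd_rev last_rev)
  qed
qed

lemma P_d:
  assumes "U x y"
  shows "oedge x y - wv (P x y) \<in> VS.span ((dvec :: 'v set \<Rightarrow> ('v \<times> 'v \<Rightarrow> 'k::field)) ` newE)"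
proof (cases "G x y")
  case True
  have "oedge x y - wv (P x y) = (0 :: 'v \<times> 'v \<Rightarrow> 'k)" using True unfolding P_def by simp
  then show ?thesis by (simp add: VS.span_zero)
next
  case False
  have m: "{x, y} \<in> newE" using assms False unfolding newE_def by blast
  show ?thesis
  proof (cases "(x, y) = ori {x, y}")
    case True
    have p: "P x y = gp x y" using False True unfolding P_def by simp
    have "oedge x y - wv (P x y) = (dvec {x, y} :: 'v \<times> 'v \<Rightarrow> 'k)"
      unfolding dvec_def True[symmetric] p by simp
    moreover have "(dvec {x, y} :: 'v \<times> 'v \<Rightarrow> 'k) \<in> dvec ` newE" by (rule imageI[OF m])
    ultimately show ?thesis using VS.span_base by simp
  next
    case ne: False
    have o: "ori {x, y} = (y, x)" by (rule ori_cases[OF assms False ne])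
    have p: "P x y = rev (gp y x)" using False ne unfolding P_def by simp
    have d: "(dvec {x, y} :: 'v \<times> 'v \<Rightarrow> 'k) = oedge y x - wv (gp y x)"
      unfolding dvec_def o by simp
    have "oedge x y - wv (P x y) = - (dvec {x, y} :: 'v \<times> 'v \<Rightarrow> 'k)"
      unfolding d p wv_rev by (rule ext) (simp add: oedge_swap[of x y])
    moreover have "(dvec {x, y} :: 'v \<times> 'v \<Rightarrow> 'k) \<in> VS.span (dvec ` newE)"
      by (rule VS.span_base) (rule imageI[OF m])
    ultimately show ?thesis using VS.span_neg by simp
  qed
qed

lemma A2:
  assumes "0 < L"
  shows "real (num_edges G) - real (dim_cycle_space TYPE('k::field) G (L * q))
    \<le> real (num_edges U) - real (dim_cycle_space TYPE('k) U q)"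
proof -
  define CG where "CG = (cycle_vec ` cycles_upto G (L * q) :: ('v \<times> 'v \<Rightarrow> 'k) set)"
  define CU where "CU = (cycle_vec ` cycles_upto U q :: ('v \<times> 'v \<Rightarrow> 'k) set)"
  define D where "D = ((dvec :: 'v set \<Rightarrow> ('v \<times> 'v \<Rightarrow> 'k)) ` newE)"
  obtain B where B: "B \<subseteq> CG" "VS.independent B" "CG \<subseteq> VS.span B" "card B = VS.dim CG"
    by (rule VS.basis_exists)
  have finB: "finite B" using B(1) finite_cycles[OF sgG] finite_subset unfolding CG_def by blast
  have finD: "finite D" unfolding D_def using finite_newE by simp
  have CUsub: "CU \<subseteq> VS.span (B \<union> D)"
  proof
    fix v assume "v \<in> CU"
    then obtain xs where xs: "xs \<in> cycles_upto U q" and v: "v = cycle_vec xs" unfolding CU_def by blast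
    have ne: "xs \<noteq> []" using xs unfolding cycles_upto_def by auto
    have lq: "length xs \<le> q" using xs unfolding cycles_upto_def by auto
    define w where "w = xs @ [hd xs]"
    have wkw: "wk U w" unfolding w_def by (rule cycle_wk[OF xs])
    have wne: "w \<noteq> []" unfolding w_def by simp
    have rp: "wk G (repl P w) \<and> repl P w \<noteq> [] \<and> hd (repl P w) = hd w
      \<and> last (repl P w) = last w \<and> length (repl P w) \<le> L * (length w - 1) + 1
      \<and> (wv w - wv (repl P w) :: 'v \<times> 'v \<Rightarrow> 'k) \<in> VS.span D"
      unfolding D_def
      by (rule repl_props[where U=U and G=G and P=P and L=L, OF P_ok[OF _ assms] P_d wkw wne])
    have hw: "hd w = last w" unfolding w_def using ne by simp
    have lw: "length (repl P w) \<le> Suc (L * q)"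
    proof -
      have "length (repl P w) \<le> L * (length w - 1) + 1" using rp by blast
      also have "\<dots> = L * length xs + 1" unfolding w_def by simp
      also have "\<dots> \<le> L * q + 1" using lq by simp
      finally show ?thesis by simp
    qed
    have "(wv (repl P w) :: 'v \<times> 'v \<Rightarrow> 'k) \<in> VS.span CG"
      unfolding CG_def by (rule closed_walk_span) (use rp hw lw in auto)
    then have s1: "(wv (repl P w) :: 'v \<times> 'v \<Rightarrow> 'k) \<in> VS.span (B \<union> D)"
    proof -
      have "VS.span CG \<subseteq> VS.span B" using VS.span_mono[OF B(3)] unfolding VS.span_span .
      moreover have "VS.span B \<subseteq> VS.span (B \<union> D)" by (rule VS.span_mono) blast
      ultimately show ?thesis using \<open>wv (repl P w) \<in> VS.span CG\<close> by blast
    qed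
    have s2: "(wv w - wv (repl P w) :: 'v \<times> 'v \<Rightarrow> 'k) \<in> VS.span (B \<union> D)"
      using rp VS.span_mono[of D "B \<union> D"] by blast
    have "v = (wv w - wv (repl P w)) + wv (repl P w)"
      unfolding v w_def cycle_vec_wv[OF ne] by simp
    then show "v \<in> VS.span (B \<union> D)" using VS.span_add[OF s2 s1] by simp
  qed
  have "VS.dim CU \<le> card (B \<union> D)" using VS.dim_le_card[OF CUsub] finB finD by simp
  also have "\<dots> \<le> card B + card D" by (rule card_Un_le)
  also have "\<dots> \<le> VS.dim CG + card newE" using B(4) card_image_le[OF finite_newE] unfolding D_def by simp
  finally have "VS.dim CU \<le> VS.dim CG + card newE" .
  moreover have "dim_cycle_space TYPE('k) U q = VS.dim CU" unfolding dim_cycle_space_def CU_def ..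
  moreover have "dim_cycle_space TYPE('k) G (L * q) = VS.dim CG" unfolding dim_cycle_space_def CG_def ..
  ultimately show ?thesis using num_edges_U by simp
qed

definition cv :: "'v set \<Rightarrow> ('v \<times> 'v \<Rightarrow> 'k::field)" where
  "cv s = wv (fst (ori s) # gp (snd (ori s)) (fst (ori s)))"

lemma cv_props:
  assumes "s \<in> newE"
  shows "wk U (fst (ori s) # gp (snd (ori s)) (fst (ori s)))"
    "length (fst (ori s) # gp (snd (ori s)) (fst (ori s))) \<le> Suc (Suc L)"
    "last (fst (ori s) # gp (snd (ori s)) (fst (ori s))) = fst (ori s)"
    "(cv s :: 'v \<times> 'v \<Rightarrow> 'k::field) = oedge (fst (ori s)) (snd (ori s)) + wv (gp (snd (ori s)) (fst (ori s)))"
proof -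
  define a where "a = fst (ori s)"
  define b where "b = snd (ori s)"
  have o: "U a b" "\<not> G a b" using ori[OF assms] unfolding a_def b_def by blast+
  have g: "wk G (gp b a) \<and> gp b a \<noteq> [] \<and> hd (gp b a) = b \<and> last (gp b a) = a \<and> length (gp b a) \<le> Suc L"
    by (rule gp[OF symU[OF o(1)]])
  have g1: "gp b a \<noteq> []" "hd (gp b a) = b" "wk G (gp b a)" "last (gp b a) = a" "length (gp b a) \<le> Suc L"
    using g by blast+
  have e: "gp b a = b # tl (gp b a)" using hd_Cons_tl[OF g1(1)] g1(2) by simp
  have "wk U (gp b a)" using wk_mono[OF sub g1(3)] .
  then have "wk U (b # tl (gp b a))" using e by simp
  then have "wk U (a # b # tl (gp b a))" using o(1) by simp
  then have "wk U (a # gp b a)" by (subst e)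
  then show "wk U (fst (ori s) # gp (snd (ori s)) (fst (ori s)))" unfolding a_def b_def .
  show "length (fst (ori s) # gp (snd (ori s)) (fst (ori s))) \<le> Suc (Suc L)"
    using g1(5) unfolding a_def b_def by simp
  have "last (a # gp b a) = a" using g1(1,4) by simp
  then show "last (fst (ori s) # gp (snd (ori s)) (fst (ori s))) = fst (ori s)"
    unfolding a_def b_def .
  have "(wv (a # b # tl (gp b a)) :: 'v \<times> 'v \<Rightarrow> 'k) = oedge a b + wv (b # tl (gp b a))" by simp
  then have "(wv (a # gp b a) :: 'v \<times> 'v \<Rightarrow> 'k) = oedge a b + wv (gp b a)"
    by (subst (1 2) e)
  then show "(cv s :: 'v \<times> 'v \<Rightarrow> 'k::field) = oedge (fst (ori s)) (snd (ori s)) + wv (gp (snd (ori s)) (fst (ori s)))"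
    unfolding cv_def a_def b_def .
qed

lemma cv_eval:
  assumes "s \<in> newE" "t \<in> newE"
  shows "(cv s :: 'v \<times> 'v \<Rightarrow> 'k::field) (ori t) = (if s = t then 1 else 0)"
proof -
  define a where "a = fst (ori s)"
  define b where "b = snd (ori s)"
  define a' where "a' = fst (ori t)"
  define b' where "b' = snd (ori t)"
  have o: "s = {a, b}" "U a b" "\<not> G a b" using ori[OF assms(1)] unfolding a_def b_def by blast+
  have o': "t = {a', b'}" "U a' b'" "\<not> G a' b'" using ori[OF assms(2)] unfolding a'_def b'_def by blast+
  have ot: "ori t = (a', b')" unfolding a'_def b'_def by simp
  have ng: "\<not> G b' a'" using o'(3) symG by blast
  have g: "wk G (gp b a)" using gp[OF symU[OF o(2)]] by blast
  have w0: "(wv (gp b a) :: 'v \<times> 'v \<Rightarrow> 'k) (a', b') = 0" by (rule wv_vanish[OF g o'(3) ng])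
  have c: "(cv s :: 'v \<times> 'v \<Rightarrow> 'k) (ori t) = oedge a b (a', b') + 0"
    using cv_props(4)[OF assms(1), where 'k='k] w0 unfolding ot a_def[symmetric] b_def[symmetric] by simp
  have ab: "a \<noteq> b" using o(2) irrU by blast
  show ?thesis
  proof (cases "s = t")
    case True
    then have "a' = a" "b' = b" unfolding a_def b_def a'_def b'_def by simp_all
    then have "oedge a b (a', b') = (1::'k)" using ab unfolding oedge_def by simp
    then show ?thesis using c True by simp
  next
    case False
    have 1: "(a', b') \<noteq> (a, b)" using False o o' by blast
    have 2: "(a', b') \<noteq> (b, a)" using False o o' by blast
    have "oedge a b (a', b') = (0::'k)" unfolding oedge_def if_not_P[OF 1] if_not_P[OF 2] by simp
    then show ?thesis using c False by simp
  qed
qed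

lemma A1:
  assumes "q0 \<le> q" "L + 1 \<le> q"
  shows "real (num_edges U) - real (dim_cycle_space TYPE('k::field) U q)
    \<le> real (num_edges G) - real (dim_cycle_space TYPE('k) G q0)"
proof -
  define CG where "CG = (cycle_vec ` cycles_upto G q0 :: ('v \<times> 'v \<Rightarrow> 'k) set)"
  define CU where "CU = (cycle_vec ` cycles_upto U q :: ('v \<times> 'v \<Rightarrow> 'k) set)"
  obtain B where B: "B \<subseteq> CG" "VS.independent B" "CG \<subseteq> VS.span B" "card B = VS.dim CG"
    by (rule VS.basis_exists)
  have finB: "finite B" using B(1) finite_cycles[OF sgG] finite_subset unfolding CG_def by blast
  have Bvan: "b (ori t) = 0" if bB: "b \<in> B" and tN: "t \<in> newE" for b t
  proof -
    have "b \<in> CG" using B(1) bB by blast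
    then obtain xs where xs: "xs \<in> cycles_upto G q0" "b = cycle_vec xs" unfolding CG_def by blast
    have o: "\<not> G (fst (ori t)) (snd (ori t))" using ori[OF tN] by blast
    then have o2: "\<not> G (snd (ori t)) (fst (ori t))" using symG by blast
    have "b (fst (ori t), snd (ori t)) = 0" unfolding xs(2) by (rule cycle_vanish[OF xs(1) o o2])
    then show ?thesis by simp
  qed
  have main: "VS.independent (B \<union> (cv :: 'v set \<Rightarrow> ('v \<times> 'v \<Rightarrow> 'k)) ` M) \<and> card (B \<union> (cv :: 'v set \<Rightarrow> ('v \<times> 'v \<Rightarrow> 'k)) ` M) = card B + card M"
    if "M \<subseteq> newE" for M
  proof -
    have "finite M" using that finite_newE finite_subset by blast
    then show ?thesis using that
    proof (induction M rule: finite_induct)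
      case empty
      then show ?case using B(2) by simp
    next
      case (insert t M)
      have tN: "t \<in> newE" using insert by blast
      have MN: "M \<subseteq> newE" using insert by blast
      have IH: "VS.independent (B \<union> (cv :: 'v set \<Rightarrow> ('v \<times> 'v \<Rightarrow> 'k)) ` M)" "card (B \<union> (cv :: 'v set \<Rightarrow> ('v \<times> 'v \<Rightarrow> 'k)) ` M) = card B + card M"
        using insert(3)[OF MN] by blast+
      have van: "\<forall>v\<in>B \<union> (cv :: 'v set \<Rightarrow> ('v \<times> 'v \<Rightarrow> 'k)) ` M. v (ori t) = 0"
      proof
        fix v assume "v \<in> B \<union> (cv :: 'v set \<Rightarrow> ('v \<times> 'v \<Rightarrow> 'k)) ` M"
        then show "v (ori t) = 0"
        proof
          assume "v \<in> B" then show ?thesis using Bvan tN by blast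
        next
          assume "v \<in> (cv :: 'v set \<Rightarrow> ('v \<times> 'v \<Rightarrow> 'k)) ` M"
          then obtain m where m: "m \<in> M" "v = cv m" by blast
          have "m \<noteq> t" using m(1) insert(2) by blast
          then show ?thesis using cv_eval[of m t, where 'k='k] m MN tN by auto
        qed
      qed
      have one: "(cv t :: 'v \<times> 'v \<Rightarrow> 'k) (ori t) = 1" using cv_eval[OF tN tN, where 'k='k] by simp
      have nsp: "(cv t :: 'v \<times> 'v \<Rightarrow> 'k) \<notin> VS.span (B \<union> cv ` M)"
      proof
        assume "(cv t :: 'v \<times> 'v \<Rightarrow> 'k) \<in> VS.span (B \<union> cv ` M)"
        then have "(cv t :: 'v \<times> 'v \<Rightarrow> 'k) (ori t) = 0" by (rule span_vanish[OF _ van])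
        then show False using one by simp
      qed
      have nin: "(cv t :: 'v \<times> 'v \<Rightarrow> 'k) \<notin> B \<union> cv ` M"
        using nsp VS.span_base[of "cv t" "B \<union> cv ` M"] by blast
      have eq: "B \<union> (cv :: 'v set \<Rightarrow> ('v \<times> 'v \<Rightarrow> 'k)) ` insert t M = insert (cv t) (B \<union> cv ` M)" by auto
      have fin: "finite (B \<union> (cv :: 'v set \<Rightarrow> ('v \<times> 'v \<Rightarrow> 'k)) ` M)" using finB insert(1) by simp
      show ?case unfolding eq
        using VS.independent_insertI[OF nsp IH(1)] card_insert_disjoint[OF fin nin] IH(2) insert(1,2) by simp
    qed
  qed
  define S where "S = B \<union> (cv :: 'v set \<Rightarrow> ('v \<times> 'v \<Rightarrow> 'k)) ` newE"
  have S: "VS.independent S" "card S = card B + card newE" using main[OF subset_refl] unfolding S_def by blast+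
  have CGCU: "CG \<subseteq> CU" unfolding CG_def CU_def by (rule image_mono[OF cycles_mono[OF sub assms(1)]])
  have Ssub: "S \<subseteq> VS.span CU"
  proof
    fix v assume "v \<in> S"
    then show "v \<in> VS.span CU" unfolding S_def
    proof
      assume "v \<in> B"
      then have "v \<in> CU" using B(1) CGCU by blast
      then show ?thesis by (rule VS.span_base)
    next
      assume "v \<in> cv ` newE"
      then obtain t where t: "t \<in> newE" "v = cv t" by blast
      note cp = cv_props[OF t(1)]
      have ne: "fst (ori t) # gp (snd (ori t)) (fst (ori t)) \<noteq> []" by simp
      have hl: "hd (fst (ori t) # gp (snd (ori t)) (fst (ori t))) = last (fst (ori t) # gp (snd (ori t)) (fst (ori t)))"
        using cp(3) by simp
      have ln: "length (fst (ori t) # gp (snd (ori t)) (fst (ori t))) \<le> Suc q"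
        using cp(2) assms(2) by linarith
      have "(wv (fst (ori t) # gp (snd (ori t)) (fst (ori t))) :: 'v \<times> 'v \<Rightarrow> 'k) \<in> VS.span CU"
        unfolding CU_def by (rule closed_walk_span[OF cp(1) ne hl ln])
      then show ?thesis unfolding t(2) cv_def .
    qed
  qed
  have finCU: "finite CU" unfolding CU_def using finite_cycles[OF sgU] by simp
  have "card S \<le> VS.dim CU" by (rule card_le_dim[OF S(1) Ssub finCU])
  then have "VS.dim CG + card newE \<le> VS.dim CU" using S(2) B(4) by simp
  moreover have "dim_cycle_space TYPE('k) U q = VS.dim CU" unfolding dim_cycle_space_def CU_def ..
  moreover have "dim_cycle_space TYPE('k) G q0 = VS.dim CG" unfolding dim_cycle_space_def CG_def ..
  ultimately show ?thesis using num_edges_U by simp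
qed

end

lemma walk_from_gdist:
  assumes "F x y" "gdist E x y \<le> enat L * gdist F x y"
  shows "\<exists>p. wk E p \<and> p \<noteq> [] \<and> hd p = x \<and> last p = y \<and> length p \<le> Suc L"
proof -
  have w1: "is_walk F x y [x, y]" unfolding is_walk_def using assms(1)
    by (auto simp: less_Suc_eq)
  have le1: "(LEAST k. \<exists>xs. is_walk F x y xs \<and> length xs = Suc k) \<le> 1"
    by (rule Least_le) (use w1 in auto)
  have "gdist F x y \<le> enat 1" unfolding gdist_def using w1 le1 by auto
  then obtain m where m: "gdist F x y = enat m" "m \<le> 1" by (cases "gdist F x y") auto
  have "enat L * gdist F x y \<le> enat L" using m by (cases m) auto
  then have gE: "gdist E x y \<le> enat L" using assms(2) by (rule order.trans[rotated])
  have ex: "\<exists>xs. is_walk E x y xs"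
  proof (rule ccontr)
    assume "\<not> ?thesis"
    then have "gdist E x y = \<infinity>" unfolding gdist_def by simp
    then show False using gE by simp
  qed
  define k where "k = (LEAST k. \<exists>xs. is_walk E x y xs \<and> length xs = Suc k)"
  have "gdist E x y = enat k" unfolding gdist_def k_def using ex by simp
  then have kL: "k \<le> L" using gE by simp
  have "\<exists>k xs. is_walk E x y xs \<and> length xs = Suc k"
    using ex by (metis is_walk_def length_greater_0_conv Suc_pred)
  then have "\<exists>xs. is_walk E x y xs \<and> length xs = Suc k"
    unfolding k_def by (rule LeastI_ex)
  then obtain xs where xs: "is_walk E x y xs" "length xs = Suc k" by blast
  have "wk E xs" using xs(1) unfolding is_walk_def wk_nth by blast
  then show ?thesis using xs kL unfolding is_walk_def by auto
qed

lemma sq_le: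
  assumes "\<And>n. real (num_edges (G n)) - real (dim_cycle_space K (G n) a)
      \<le> real (num_edges (H n)) - real (dim_cycle_space K (H n) b)"
  shows "s_q K V G a \<le> s_q K V H b"
proof -
  have "ereal ((real (num_edges (G n)) - real (dim_cycle_space K (G n) a)) / real (card (V n)))
      \<le> ereal ((real (num_edges (H n)) - real (dim_cycle_space K (H n) b)) / real (card (V n)))" for n
    using divide_right_mono[OF assms[of n], of "real (card (V n))"] by simp
  then have "liminf (\<lambda>n. ereal ((real (num_edges (G n)) - real (dim_cycle_space K (G n) a)) / real (card (V n))))
    \<le> liminf (\<lambda>n. ereal ((real (num_edges (H n)) - real (dim_cycle_space K (H n) b)) / real (card (V n))))"
    by (intro Liminf_mono always_eventually) simp
  then show ?thesis unfolding s_q_def by (rule ereal_minus_mono) simp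
qed

lemma beta_le:
  assumes "\<And>q. \<exists>q'. s_q K V G q' \<le> s_q K V H q"
  shows "beta K V G \<le> beta K V H"
  unfolding beta_def
proof (rule INF_greatest)
  fix q
  obtain q' where "s_q K V G q' \<le> s_q K V H q" using assms by blast
  then show "(INF q. s_q K V G q) \<le> s_q K V H q" by (rule INF_lower2[OF UNIV_I])
qed

theorem proposition2:
  fixes V :: "nat \<Rightarrow> 'v set" and G H :: "nat \<Rightarrow> 'v \<Rightarrow> 'v \<Rightarrow> bool"
  assumes "graph_seq V G" and "graph_seq V H" and "seq_equiv V G H"
  shows "beta TYPE('k::field) V G = beta TYPE('k) V H"
proof -
  obtain L1 where L1: "L1 > 0" "\<forall>n. \<forall>x\<in>V n. \<forall>y\<in>V n. gdist (G n) x y \<le> enat L1 * gdist (H n) x y"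
    using assms(3) unfolding seq_equiv_def seq_prec_def by blast
  obtain L2 where L2: "L2 > 0" "\<forall>n. \<forall>x\<in>V n. \<forall>y\<in>V n. gdist (H n) x y \<le> enat L2 * gdist (G n) x y"
    using assms(3) unfolding seq_equiv_def seq_prec_def by blast
  have sgG: "simple_graph (V n) (G n)" for n using assms(1) unfolding graph_seq_def by blast
  have sgH: "simple_graph (V n) (H n)" for n using assms(2) unfolding graph_seq_def by blast
  define U where "U = (\<lambda>n x y. G n x y \<or> H n x y)"
  have sgU: "simple_graph (V n) (U n)" for n
    using sgG[of n] sgH[of n] unfolding simple_graph_def U_def by blast
  have subG: "\<And>x y. G n x y \<Longrightarrow> U n x y" for n unfolding U_def by blast
  have subH: "\<And>x y. H n x y \<Longrightarrow> U n x y" for n unfolding U_def by blast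
  have pG: "\<And>x y. U n x y \<Longrightarrow> \<exists>p. wk (G n) p \<and> p \<noteq> [] \<and> hd p = x \<and> last p = y \<and> length p \<le> Suc L1" for n
  proof -
    fix x y assume "U n x y"
    then consider "G n x y" | "H n x y" unfolding U_def by blast
    then show "\<exists>p. wk (G n) p \<and> p \<noteq> [] \<and> hd p = x \<and> last p = y \<and> length p \<le> Suc L1"
    proof cases
      case 1 then show ?thesis by (intro exI[of _ "[x, y]"]) (use L1(1) in simp)
    next
      case 2
      have "x \<in> V n" "y \<in> V n" using sgH[of n] 2 unfolding simple_graph_def by blast+
      then show ?thesis using walk_from_gdist[of "H n" x y "G n" L1, OF 2] L1(2) by blast
    qed
  qed
  have pH: "\<And>x y. U n x y \<Longrightarrow> \<exists>p. wk (H n) p \<and> p \<noteq> [] \<and> hd p = x \<and> last p = y \<and> length p \<le> Suc L2" for n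
  proof -
    fix x y assume "U n x y"
    then consider "H n x y" | "G n x y" unfolding U_def by blast
    then show "\<exists>p. wk (H n) p \<and> p \<noteq> [] \<and> hd p = x \<and> last p = y \<and> length p \<le> Suc L2"
    proof cases
      case 1 then show ?thesis by (intro exI[of _ "[x, y]"]) (use L2(1) in simp)
    next
      case 2
      have "x \<in> V n" "y \<in> V n" using sgG[of n] 2 unfolding simple_graph_def by blast+
      then show ?thesis using walk_from_gdist[of "G n" x y "H n" L2, OF 2] L2(2) by blast
    qed
  qed
  have GU: "beta TYPE('k) V G \<le> beta TYPE('k) V U"
  proof (rule beta_le)
    fix q
    have "s_q TYPE('k) V G (L1 * q) \<le> s_q TYPE('k) V U q"
      by (rule sq_le) (rule A2[OF sgU sgG subG pG L1(1)])
    then show "\<exists>q'. s_q TYPE('k) V G q' \<le> s_q TYPE('k) V U q" by blast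
  qed
  have UG: "beta TYPE('k) V U \<le> beta TYPE('k) V G"
  proof (rule beta_le)
    fix q
    have "s_q TYPE('k) V U (max q (L1 + 1)) \<le> s_q TYPE('k) V G q"
      by (rule sq_le) (rule A1[OF sgU sgG subG pG]; simp)
    then show "\<exists>q'. s_q TYPE('k) V U q' \<le> s_q TYPE('k) V G q" by blast
  qed
  have HU: "beta TYPE('k) V H \<le> beta TYPE('k) V U"
  proof (rule beta_le)
    fix q
    have "s_q TYPE('k) V H (L2 * q) \<le> s_q TYPE('k) V U q"
      by (rule sq_le) (rule A2[OF sgU sgH subH pH L2(1)])
    then show "\<exists>q'. s_q TYPE('k) V H q' \<le> s_q TYPE('k) V U q" by blast
  qed
  have UH: "beta TYPE('k) V U \<le> beta TYPE('k) V H"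
  proof (rule beta_le)
    fix q
    have "s_q TYPE('k) V U (max q (L2 + 1)) \<le> s_q TYPE('k) V H q"
      by (rule sq_le) (rule A1[OF sgU sgH subH pH]; simp)
    then show "\<exists>q'. s_q TYPE('k) V U q' \<le> s_q TYPE('k) V H q" by blast
  qed
  show ?thesis using GU UG HU UH by (rule_tac antisym) (auto intro: order.trans)
qed

end
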